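(* Let $R$ be a connected graph with vertices $v_1,\dots,v_r$, let $H$ be a rooted graph on $n$ vertices, let $\alpha\in[0,1]$, and let $\rho_1(\alpha),\dots,\rho_r(\alpha)$ be the eigenvalues (with multiplicity) of $A_\alpha(R)$. Then, as multisets, \[ \mathrm{Spec}\big(A_\alpha(R\{H\})\big)=\bigcup_{j=1}^{r}\mathrm{Spec}\big(A_\alpha(H)+\rho_j(\alpha)E\big). \]
   Context: For a graph $G$ and $\alpha\in[0,1]$, $A_\alpha(G)=\alpha D(G)+(1-\alpha)A(G)$, where $D(G)$ is the diagonal matrix of vertex degrees and $A(G)$ the adjacency matrix. For a connected graph $R$ on vertices $v_1,\dots,v_r$ and a rooted graph $H$, $R\{H\}$ is the graph obtained from $R$ and $r$ copies of $H$ by identifying the root of the $i$-th copy of $H$ with $v_i$, for each $i$. Vertices of $H$ are ordered so that the root is the last ($n$-th) vertex, and $E$ is the $n\times n$ matrix with $1$ in entry $(n,n)$ (the root's diagonal position) and zeros elsewhere. $\mathrm{Spec}(M)$ denotes the multiset of eigenvalues of $M$, and unions of spectra are multiset unions. *)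

theory Defs
  imports "Jordan_Normal_Form.Char_Poly"
begin

definition simple_graph :: "nat \<Rightarrow> (nat \<Rightarrow> nat \<Rightarrow> bool) \<Rightarrow> bool" where
  "simple_graph m adj \<longleftrightarrow>
     (\<forall>i<m. \<forall>j<m. adj i j \<longleftrightarrow> adj j i) \<and> (\<forall>i<m. \<not> adj i i)"

definition connected_graph :: "nat \<Rightarrow> (nat \<Rightarrow> nat \<Rightarrow> bool) \<Rightarrow> bool" where
  "connected_graph m adj \<longleftrightarrow> m \<ge> 1 \<and>
     (\<forall>i<m. \<forall>j<m. (\<lambda>x y. x < m \<and> y < m \<and> adj x y)\<^sup>*\<^sup>* i j)"

definition degree :: "nat \<Rightarrow> (nat \<Rightarrow> nat \<Rightarrow> bool) \<Rightarrow> nat \<Rightarrow> nat" where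
  "degree m adj i = card {j. j < m \<and> adj i j}"

definition A_alpha :: "real \<Rightarrow> nat \<Rightarrow> (nat \<Rightarrow> nat \<Rightarrow> bool) \<Rightarrow> real mat" where
  "A_alpha \<alpha> m adj = \<alpha> \<cdot>\<^sub>m mat m m (\<lambda>(i,j). if i = j then real (degree m adj i) else 0)
      + (1 - \<alpha>) \<cdot>\<^sub>m mat m m (\<lambda>(i,j). if adj i j then 1 else 0)"

text \<open>Rooted product R{H}: R on {0..<r}, H on {0..<n} with root n-1.
  Vertex k of the i-th copy of H is encoded as i*n + k; the root of the i-th copy
  (i*n + (n-1)) is identified with vertex v_i of R.\<close>
definition rooted_product_adj ::
  "nat \<Rightarrow> (nat \<Rightarrow> nat \<Rightarrow> bool) \<Rightarrow> nat \<Rightarrow> (nat \<Rightarrow> nat \<Rightarrow> bool) \<Rightarrow> nat \<Rightarrow> nat \<Rightarrow> bool" where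
  "rooted_product_adj r adjR n adjH u v \<longleftrightarrow>
     (u div n = v div n \<and> adjH (u mod n) (v mod n)) \<or>
     (u mod n = n - 1 \<and> v mod n = n - 1 \<and> adjR (u div n) (v div n))"

definition root_mat :: "nat \<Rightarrow> real mat" where
  "root_mat n = mat n n (\<lambda>(i,j). if i = n - 1 \<and> j = n - 1 then 1 else 0)"

definition Spec :: "real mat \<Rightarrow> complex multiset" where
  "Spec M = (THE S. char_poly (map_mat complex_of_real M) = (\<Prod>a\<in>#S. [:- a, 1:]))"

end

theory Submission
  imports Defs "Jordan_Normal_Form.Schur_Decomposition"
begin
lemma sum_split_nat: "(\<Sum>w<(b::nat)*d. f w) = (\<Sum>i<b. \<Sum>k<d. f (i*d+k))"
proof (induction b)
  case 0 then show ?case by simp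
next
  case (Suc b)
  have "(\<Sum>w<Suc b*d. f w) = (\<Sum>w\<in>{0..<b*d}. f w) + (\<Sum>w\<in>{b*d..<b*d+d}. f w)"
    by (subst sum.atLeastLessThan_concat) (auto simp: atLeast0LessThan add.commute)
  also have "(\<Sum>w\<in>{b*d..<b*d+d}. f w) = (\<Sum>k\<in>{0..<d}. f (k + b*d))"
    using sum.shift_bounds_nat_ivl[of f 0 "b*d" d] by (simp add: add.commute)
  finally show ?case using Suc by (simp add: atLeast0LessThan add.commute)
qed
definition kron :: "'a::semiring_1 mat \<Rightarrow> 'a mat \<Rightarrow> 'a mat" where
  "kron A B = mat (dim_row A * dim_row B) (dim_col A * dim_col B)
     (\<lambda>(u,v). A $$ (u div dim_row B, v div dim_col B) * B $$ (u mod dim_row B, v mod dim_col B))"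

lemma kron_dims[simp]: "dim_row (kron A B) = dim_row A * dim_row B" "dim_col (kron A B) = dim_col A * dim_col B"
  unfolding kron_def by (rule dim_row_mat, rule dim_col_mat)

lemma kron_carrier[simp]: "A \<in> carrier_mat a b \<Longrightarrow> B \<in> carrier_mat c d \<Longrightarrow> kron A B \<in> carrier_mat (a*c) (b*d)"
  unfolding carrier_mat_def kron_dims by auto

lemma idx_bound: assumes "i < (a::nat)" "k < c" shows "i*c+k < a*c"
proof -
  have "i*c+k < i*c + c" using assms by simp
  also have "\<dots> = Suc i * c" by simp
  also have "\<dots> \<le> a*c" using assms by (intro mult_le_mono1) simp
  finally show ?thesis .
qed

lemma idx_div[simp]: "k < (c::nat) \<Longrightarrow> (i*c+k) div c = i" "k < c \<Longrightarrow> (i*c+k) mod c = k"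
  by simp_all

lemma kron_index:
  assumes "A \<in> carrier_mat a b" "B \<in> carrier_mat c d" "i < a" "k < c" "j < b" "l < d"
  shows "kron A B $$ (i*c+k, j*d+l) = A $$ (i,j) * B $$ (k,l)"
proof -
  have "i*c+k < a*c" "j*d+l < b*d" using assms idx_bound by auto
  moreover have "dim_row B = c" "dim_col B = d" "dim_row A = a" "dim_col A = b" using assms by auto
  ultimately show ?thesis using assms(4,6) unfolding kron_def by (simp only: index_mat split idx_div)
qed


lemma kron_mult:
  assumes A: "(A :: 'a :: comm_semiring_1 mat) \<in> carrier_mat a b" and B: "B \<in> carrier_mat c d"
    and C: "C \<in> carrier_mat b e" and D: "D \<in> carrier_mat d f"
  shows "kron A B * kron C D = kron (A * C) (B * D)"
proof (rule eq_matI)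
  fix u v assume u: "u < dim_row (kron (A * C) (B * D))" and v: "v < dim_col (kron (A * C) (B * D))"
  have uu: "u < a*c" and vv: "v < e*f" using u v A B C D by auto
  have c0: "0 < c" and f0: "0 < f" using uu vv by (auto intro!: Nat.gr0I)
  define i k j l where "i = u div c" "k = u mod c" "j = v div f" "l = v mod f"
  have ik: "u = i*c+k" "i < a" "k < c" using uu c0 unfolding i_k_j_l_def
    by (auto simp: less_mult_imp_div_less)
  have jl: "v = j*f+l" "j < e" "l < f" using vv f0 unfolding i_k_j_l_def
    by (auto simp: less_mult_imp_div_less)
  have "(kron A B * kron C D) $$ (u,v) = (\<Sum>w<b*d. kron A B $$ (u,w) * kron C D $$ (w,v))"
    using uu vv A B C D by (simp add: scalar_prod_def index_mult_mat row_def col_def lessThan_atLeast0)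
  also have "\<dots> = (\<Sum>x<b. \<Sum>y<d. kron A B $$ (i*c+k,x*d+y) * kron C D $$ (x*d+y,j*f+l))"
    unfolding sum_split_nat ik(1) jl(1) ..
  also have "\<dots> = (\<Sum>x<b. \<Sum>y<d. (A $$ (i,x) * C $$ (x,j)) * (B $$ (k,y) * D $$ (y,l)))"
  proof (intro sum.cong refl)
    fix x y assume xy: "x \<in> {..<b}" "y \<in> {..<d}"
    have "kron A B $$ (i*c+k,x*d+y) = A $$ (i,x) * B $$ (k,y)"
      by (rule kron_index[OF A B]) (use ik xy in auto)
    moreover have "kron C D $$ (x*d+y,j*f+l) = C $$ (x,j) * D $$ (y,l)"
      by (rule kron_index[OF C D]) (use jl xy in auto)
    ultimately show "kron A B $$ (i*c+k,x*d+y) * kron C D $$ (x*d+y,j*f+l) =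
       (A $$ (i,x) * C $$ (x,j)) * (B $$ (k,y) * D $$ (y,l))" by (simp add: ac_simps)
  qed
  also have "\<dots> = (\<Sum>x<b. A $$ (i,x) * C $$ (x,j)) * (\<Sum>y<d. B $$ (k,y) * D $$ (y,l))"
    by (simp add: sum_product)
  also have "\<dots> = (A*C) $$ (i,j) * (B*D) $$ (k,l)"
    using A B C D ik jl by (simp add: scalar_prod_def index_mult_mat row_def col_def lessThan_atLeast0)
  also have "\<dots> = kron (A * C) (B * D) $$ (u,v)"
    using A B C D ik jl by (simp add: kron_index[of _ a e _ c f])
  finally show "(kron A B * kron C D) $$ (u, v) = kron (A * C) (B * D) $$ (u, v)" .
qed (use A B C D in auto)

lemma kron_one: "0 < c \<Longrightarrow> kron (1\<^sub>m a) (1\<^sub>m c) = (1\<^sub>m (a*c) :: 'a::semiring_1 mat)"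
proof (rule eq_matI)
  fix u v assume "0 < c" "u < dim_row (1\<^sub>m (a * c) :: 'a mat)" "v < dim_col (1\<^sub>m (a * c) :: 'a mat)"
  hence uu: "u < a*c" and vv: "v < a*c" and c0: "0 < c" by auto
  have "u = (u div c)*c + u mod c" "v = (v div c)*c + v mod c" by simp_all
  moreover have "u div c < a" "v div c < a" using uu vv by (auto simp: less_mult_imp_div_less)
  moreover have "u mod c < c" "v mod c < c" using c0 by auto
  ultimately have "(u = v) = (u div c = v div c \<and> u mod c = v mod c)" by metis
  then show "kron (1\<^sub>m a) (1\<^sub>m c) $$ (u, v) = (1\<^sub>m (a * c) :: 'a mat) $$ (u, v)"
    using uu vv \<open>u div c < a\<close> \<open>v div c < a\<close> \<open>u mod c < c\<close> \<open>v mod c < c\<close>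
    by (simp add: kron_def)
qed auto


definition blk :: "nat \<Rightarrow> 'a mat \<Rightarrow> nat \<Rightarrow> 'a mat" where
  "blk n M i = mat n n (\<lambda>(k,k'). M $$ (i*n+k, i*n+k'))"

lemma det_block_ut:
  fixes M :: "'a::idom mat"
  assumes "M \<in> carrier_mat (r*n) (r*n)"
    and "\<And>i i' k k'. i' < i \<Longrightarrow> i < r \<Longrightarrow> k < n \<Longrightarrow> k' < n \<Longrightarrow> M $$ (i*n+k, i'*n+k') = 0"
  shows "det M = (\<Prod>i<r. det (blk n M i))"
  using assms
proof (induction r arbitrary: M)
  case 0
  then show ?case by simp
next
  case (Suc r)
  note M = Suc.prems(1) and Z = Suc.prems(2)
  define A1 where "A1 = mat (r*n) (r*n) (\<lambda>ij. M $$ ij)"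
  define A2 where "A2 = mat (r*n) n (\<lambda>(i,j). M $$ (i,j+r*n))"
  define A3 where "A3 = mat n (r*n) (\<lambda>(i,j). M $$ (i+r*n,j))"
  define A4 where "A4 = mat n n (\<lambda>(i,j). M $$ (i+r*n,j+r*n))"
  have dims: "dim_row M = r*n + n" "dim_col M = r*n + n" using M by auto
  have sb: "split_block M (r*n) (r*n) = (A1,A2,A3,A4)"
    unfolding split_block_def Let_def A1_def A2_def A3_def A4_def using dims by simp
  note S = split_block[OF sb dims]
  have A30: "A3 = 0\<^sub>m n (r*n)"
  proof (rule eq_matI)
    fix x y assume xy: "x < dim_row (0\<^sub>m n (r * n) :: 'a mat)" "y < dim_col (0\<^sub>m n (r * n) :: 'a mat)"
    hence x: "x < n" and y: "y < r*n" by auto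
    hence n0: "0 < n" by auto
    have "y div n < r" using y by (simp add: less_mult_imp_div_less)
    moreover have "y mod n < n" using n0 by simp
    ultimately have "M $$ (r*n + x, (y div n)*n + y mod n) = 0"
      using Z[of "y div n" r x "y mod n"] x by simp
    thus "A3 $$ (x, y) = (0\<^sub>m n (r * n) :: 'a mat) $$ (x, y)"
      unfolding A3_def using x y by (simp add: add.commute)
  qed (auto simp: A3_def)
  have "det M = det A1 * det A4"
    unfolding S(5) by (rule det_four_block_mat_lower_left_zero[OF S(1) S(2) A30 S(4)])
  moreover have "det A1 = (\<Prod>i<r. det (blk n A1 i))"
  proof (rule Suc.IH)
    show "A1 \<in> carrier_mat (r*n) (r*n)" by (rule S(1))
    fix i i' k k' assume h: "i' < i" "i < r" "k < n" "k' < n"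
    have "i*n+k < r*n" "i'*n+k' < r*n" using h idx_bound[of i r k n] idx_bound[of i' r k' n] by auto
    thus "A1 $$ (i*n+k, i'*n+k') = 0" unfolding A1_def using Z[of i' i k k'] h by simp
  qed
  moreover have "blk n A1 i = blk n M i" if "i < r" for i
  proof -
    have "i*n+k < r*n" if "k < n" for k using idx_bound[of i r k n] \<open>i < r\<close> that by auto
    thus ?thesis unfolding blk_def A1_def by (intro eq_matI) auto
  qed
  moreover have "A4 = blk n M r" unfolding A4_def blk_def by (intro eq_matI) (auto simp: add.commute)
  ultimately show ?case by simp
qed

lemma char_poly_block_ut:
  fixes M :: "'a::idom mat"
  assumes M: "M \<in> carrier_mat (r*n) (r*n)"
    and Z: "\<And>i i' k k'. i' < i \<Longrightarrow> i < r \<Longrightarrow> k < n \<Longrightarrow> k' < n \<Longrightarrow> M $$ (i*n+k, i'*n+k') = 0"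
  shows "char_poly M = (\<Prod>i<r. char_poly (blk n M i))"
proof -
  have CM: "char_poly_matrix M \<in> carrier_mat (r*n) (r*n)" using M by simp
  have "det (char_poly_matrix M) = (\<Prod>i<r. det (blk n (char_poly_matrix M) i))"
  proof (rule det_block_ut[OF CM])
    fix i i' k k' assume h: "i' < i" "i < r" "k < n" "k' < n"
    have b: "i*n+k < r*n" "i'*n+k' < r*n" using h idx_bound[of i r k n] idx_bound[of i' r k' n] by auto
    have ne: "i*n+k \<noteq> i'*n+k'"
    proof
      assume "i*n+k = i'*n+k'"
      hence "(i*n+k) div n = (i'*n+k') div n" by simp
      thus False using h by simp
    qed
    show "char_poly_matrix M $$ (i*n+k, i'*n+k') = 0"
      using M b ne Z[OF h] by (simp add: char_poly_matrix_def)
  qed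
  moreover have "blk n (char_poly_matrix M) i = char_poly_matrix (blk n M i)" if "i < r" for i
  proof -
    have b: "i*n+k < r*n" if "k < n" for k using idx_bound[of i r k n] \<open>i < r\<close> that by auto
    show ?thesis using M b unfolding blk_def char_poly_matrix_def by (intro eq_matI) auto
  qed
  ultimately show ?thesis unfolding char_poly_def by simp
qed


lemma adj_rooted:
  assumes "k < n" "l < n"
  shows "rooted_product_adj r adjR n adjH (i*n+k) (j*n+l) =
    ((i = j \<and> adjH k l) \<or> (k = n-1 \<and> l = n-1 \<and> adjR i j))"
  using assms unfolding rooted_product_adj_def by simp

lemma degree_rooted:
  assumes R: "simple_graph r adjR" and n: "n \<ge> 1" and i: "i < r" and k: "k < n"
  shows "degree (r*n) (rooted_product_adj r adjR n adjH) (i*n+k) =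
    degree n adjH k + (if k = n-1 then degree r adjR i else 0)"
proof -
  let ?P = "rooted_product_adj r adjR n adjH"
  define S1 where "S1 = (\<lambda>l. i*n+l) ` {l. l<n \<and> adjH k l}"
  define S2 where "S2 = (if k = n-1 then (\<lambda>j. j*n+(n-1)) ` {j. j<r \<and> adjR i j} else {})"
  have n0: "0 < n" using n by simp
  have eq: "{v. v < r*n \<and> ?P (i*n+k) v} = S1 \<union> S2"
  proof (rule Set.set_eqI, rule iffI)
    fix v assume "v \<in> {v. v < r*n \<and> ?P (i*n+k) v}"
    hence v: "v < r*n" and p: "?P (i*n+k) v" by auto
    have vd: "v div n < r" using v by (simp add: less_mult_imp_div_less)
    have vm: "v mod n < n" using n0 by simp
    have vv: "v = (v div n)*n + v mod n" by simp
    from p have "(i = v div n \<and> adjH k (v mod n)) \<or> (k = n-1 \<and> v mod n = n-1 \<and> adjR i (v div n))"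
      unfolding rooted_product_adj_def using k by simp
    thus "v \<in> S1 \<union> S2"
    proof
      assume h: "i = v div n \<and> adjH k (v mod n)"
      hence "v = i*n + v mod n" using vv by simp
      thus ?thesis unfolding S1_def using h vm by blast
    next
      assume h: "k = n-1 \<and> v mod n = n-1 \<and> adjR i (v div n)"
      hence "v = (v div n)*n + (n-1)" using vv by simp
      thus ?thesis unfolding S2_def using h vd by auto
    qed
  next
    fix v assume "v \<in> S1 \<union> S2"
    thus "v \<in> {v. v < r*n \<and> ?P (i*n+k) v}"
    proof
      assume "v \<in> S1"
      then obtain l where l: "l < n" "adjH k l" "v = i*n+l" unfolding S1_def by auto
      thus ?thesis using idx_bound[OF i l(1)] adj_rooted[OF k l(1)] by auto
    next
      assume "v \<in> S2"
      then obtain j where j: "j < r" "adjR i j" "v = j*n+(n-1)" "k = n-1" unfolding S2_def by (auto split: if_splits)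
      have "n - 1 < n" using n0 by simp
      thus ?thesis using idx_bound[OF j(1) \<open>n-1<n\<close>] adj_rooted[OF k \<open>n-1<n\<close>] j by auto
    qed
  qed
  have disj: "S1 \<inter> S2 = {}"
  proof (rule ccontr)
    assume "S1 \<inter> S2 \<noteq> {}"
    then obtain l j where l: "l < n" and j: "j < r" "adjR i j" and e: "i*n+l = j*n+(n-1)"
      unfolding S1_def S2_def by (auto split: if_splits)
    have "n - 1 < n" using n0 by simp
    have "(i*n+l) div n = (j*n+(n-1)) div n" using e by simp
    hence "i = j" by (metis idx_div(1) l \<open>n-1<n\<close>)
    thus False using j i R unfolding simple_graph_def by auto
  qed
  have c1: "card S1 = degree n adjH k"
    unfolding S1_def degree_def by (rule card_image) (auto simp: inj_on_def)
  have c2: "card S2 = (if k = n-1 then degree r adjR i else 0)"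
  proof (cases "k = n-1")
    case True
    have nn: "n - 1 < n" using n0 by simp
    have "inj_on (\<lambda>j. j*n+(n-1)) {j. j<r \<and> adjR i j}"
      unfolding inj_on_def by (metis idx_div(1) nn)
    then show ?thesis unfolding S2_def degree_def using True by (simp add: card_image)
  qed (simp add: S2_def)
  have "finite S1" "finite S2" unfolding S1_def S2_def by auto
  hence "card (S1 \<union> S2) = card S1 + card S2" using card_Un_disjoint disj by blast
  thus ?thesis unfolding degree_def[of "r*n"] eq c1 c2 .
qed


lemma A_alpha_carrier[simp]: "A_alpha \<alpha> m adj \<in> carrier_mat m m"
  unfolding A_alpha_def by simp

lemma A_alpha_dims[simp]: "dim_row (A_alpha \<alpha> m adj) = m" "dim_col (A_alpha \<alpha> m adj) = m"
  unfolding A_alpha_def by simp_all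

lemma root_mat_dims[simp]: "dim_row (root_mat n) = n" "dim_col (root_mat n) = n"
  unfolding root_mat_def by simp_all

lemma A_alpha_index: "u < m \<Longrightarrow> v < m \<Longrightarrow> A_alpha \<alpha> m adj $$ (u,v) =
   \<alpha> * (if u = v then real (degree m adj u) else 0) + (1-\<alpha>) * (if adj u v then 1 else 0)"
  unfolding A_alpha_def by simp

lemma root_mat_carrier[simp]: "root_mat n \<in> carrier_mat n n"
  unfolding root_mat_def by simp

lemma root_mat_index: "k < n \<Longrightarrow> l < n \<Longrightarrow> root_mat n $$ (k,l) = (if k = n-1 \<and> l = n-1 then 1 else 0)"
  unfolding root_mat_def by simp

lemma idx_eq: "k < n \<Longrightarrow> l < (n::nat) \<Longrightarrow> (i*n+k = j*n+l) = (i = j \<and> k = l)"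
  by (metis idx_div)

lemma A_alpha_rooted:
  assumes R: "simple_graph r adjR" and H: "simple_graph n adjH" and n: "n \<ge> 1"
  shows "A_alpha \<alpha> (r*n) (rooted_product_adj r adjR n adjH) =
    kron (1\<^sub>m r) (A_alpha \<alpha> n adjH) + kron (A_alpha \<alpha> r adjR) (root_mat n)"
  (is "?L = ?R")
proof (rule eq_matI)
  have n0: "0 < n" using n by simp
  fix u v assume "u < dim_row ?R" "v < dim_col ?R"
  hence u: "u < r*n" and v: "v < r*n" by auto
  define i k j l where "i = u div n" "k = u mod n" "j = v div n" "l = v mod n"
  have ik: "u = i*n+k" "i < r" "k < n" using u n0 unfolding i_k_j_l_def
    by (auto simp: less_mult_imp_div_less)
  have jl: "v = j*n+l" "j < r" "l < n" using v n0 unfolding i_k_j_l_def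
    by (auto simp: less_mult_imp_div_less)
  have irrH: "\<not> adjH k k" using H ik unfolding simple_graph_def by auto
  have irrR: "\<not> adjR i i" using R ik unfolding simple_graph_def by auto
  have L: "?L $$ (u,v) = \<alpha> * (if i = j \<and> k = l then real (degree n adjH k + (if k = n-1 then degree r adjR i else 0)) else 0)
     + (1-\<alpha>) * (if (i = j \<and> adjH k l) \<or> (k = n-1 \<and> l = n-1 \<and> adjR i j) then 1 else 0)"
    using A_alpha_index[OF u v, of \<alpha> "rooted_product_adj r adjR n adjH"]
    unfolding ik(1) jl(1) idx_eq[OF ik(3) jl(3)] adj_rooted[OF ik(3) jl(3)]
    using degree_rooted[OF R n ik(2) ik(3), of adjH] by auto
  have Rr: "?R $$ (u,v) = (if i = j then 1 else 0) * A_alpha \<alpha> n adjH $$ (k,l) + A_alpha \<alpha> r adjR $$ (i,j) * root_mat n $$ (k,l)"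
    unfolding ik(1) jl(1)
    using kron_index[of "1\<^sub>m r" r r "A_alpha \<alpha> n adjH" n n i k j l]
      kron_index[of "A_alpha \<alpha> r adjR" r r "root_mat n" n n i k j l] ik jl
    by (subst index_add_mat) (auto intro: idx_bound)
  show "?L $$ (u,v) = ?R $$ (u,v)"
    unfolding L Rr A_alpha_index[OF ik(3) jl(3)] A_alpha_index[OF ik(2) jl(2)] root_mat_index[OF ik(3) jl(3)]
    using irrH irrR by (auto simp: algebra_simps)
qed auto

lemma order_lin_prod: "Polynomial.order a (\<Prod>x\<in>#S. [:- x, 1:]) = count S (a::complex)"
proof (induction S)
  case empty
  then show ?case by (simp add: order_0I)
next
  case (add x S)
  have nz: "(\<Prod>x\<in>#S. [:- x, 1:]) \<noteq> (0::complex poly)"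
    by (auto simp: prod_mset_zero_iff)
  have "Polynomial.order a ([:- x, 1:] * (\<Prod>x\<in>#S. [:- x, 1:])) =
        Polynomial.order a [:- x, 1:] + Polynomial.order a (\<Prod>x\<in>#S. [:- x, 1:])"
    by (rule order_mult, metis nz mult_eq_0_iff pCons_eq_0_iff one_neq_zero)
  moreover have "Polynomial.order a [:- x, 1:] = (if a = x then 1 else 0)"
    by (auto simp: order_0I order_power_n_n[where n=1, simplified])
  ultimately show ?case using add by auto
qed

lemma lin_prod_inj:
  assumes "(\<Prod>x\<in>#S. [:- x, 1:]) = (\<Prod>x\<in>#T. [:- x, 1:] :: complex poly)"
  shows "S = T"
  using order_lin_prod[of _ S] order_lin_prod[of _ T] assms by (metis multiset_eqI)

lemma Spec_eqI:
  assumes "char_poly (map_mat complex_of_real M) = (\<Prod>x\<in>#S. [:- x, 1:])"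
  shows "Spec M = S"
  unfolding Spec_def
  by (rule the_equality) (use assms lin_prod_inj in auto)

lemma Spec_char_poly:
  assumes "M \<in> carrier_mat k k"
  shows "char_poly (map_mat complex_of_real M) = (\<Prod>x\<in>#Spec M. [:- x, 1:])"
proof -
  obtain as where "char_poly (map_mat complex_of_real M) = (\<Prod>a\<leftarrow>as. [:- a, 1:])"
    using char_poly_factorized[of "map_mat complex_of_real M" k] assms by auto
  hence "char_poly (map_mat complex_of_real M) = (\<Prod>x\<in>#mset as. [:- x, 1:])"
    by (metis mset_map prod_mset_prod_list)
  thus ?thesis using Spec_eqI by metis
qed


lemma prod_mset_sum_sets:
  assumes "finite I"
  shows "(\<Prod>x\<in>#(\<Sum>i\<in>I. S i). f x) = (\<Prod>i\<in>I. \<Prod>x\<in>#S i. (f x :: 'b::comm_monoid_mult))"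
  using assms by (induction I rule: finite_induct) (auto simp: image_mset_union prod_mset.union)

lemma map_kron_of_real:
  "map_mat complex_of_real (kron A B) = kron (map_mat complex_of_real A) (map_mat complex_of_real B)"
proof (rule eq_matI)
  fix i j assume "i < dim_row (kron (map_mat complex_of_real A) (map_mat complex_of_real B))"
    "j < dim_col (kron (map_mat complex_of_real A) (map_mat complex_of_real B))"
  hence i: "i < dim_row A * dim_row B" and j: "j < dim_col A * dim_col B" by auto
  have "0 < dim_row B" "0 < dim_col B" using i j by (auto intro!: Nat.gr0I)
  moreover have "i div dim_row B < dim_row A" "j div dim_col B < dim_col A"
    using i j by (auto simp: less_mult_imp_div_less)
  ultimately show "map_mat complex_of_real (kron A B) $$ (i, j) =
    kron (map_mat complex_of_real A) (map_mat complex_of_real B) $$ (i, j)"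
    using i j by (simp add: kron_def)
qed auto

lemma map_one_of_real: "map_mat complex_of_real (1\<^sub>m r) = 1\<^sub>m r"
  by (rule eq_matI) auto

lemma map_add_of_real:
  assumes "A \<in> carrier_mat a b" "B \<in> carrier_mat a b"
  shows "map_mat complex_of_real (A + B) = map_mat complex_of_real A + map_mat complex_of_real B"
  using assms by (intro eq_matI) auto

theorem theorem1:
  fixes r n :: nat and adjR adjH :: "nat \<Rightarrow> nat \<Rightarrow> bool" and \<alpha> :: real
    and \<rho> :: "real list"
  assumes "simple_graph r adjR" and "connected_graph r adjR"
    and "simple_graph n adjH" and "n \<ge> 1"
    and "0 \<le> \<alpha>" and "\<alpha> \<le> 1"
    and "mset (map complex_of_real \<rho>) = Spec (A_alpha \<alpha> r adjR)"
  shows "Spec (A_alpha \<alpha> (r * n) (rooted_product_adj r adjR n adjH)) =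
         (\<Sum>j<r. Spec (A_alpha \<alpha> n adjH + \<rho> ! j \<cdot>\<^sub>m root_mat n))"
proof -
  note R = assms(1) and H = assms(3) and n = assms(4) and sp = assms(7)
  have n0: "0 < n" using n by simp
  define AH where "AH = A_alpha \<alpha> n adjH"
  define AR where "AR = A_alpha \<alpha> r adjR"
  define E where "E = root_mat n"
  define cm :: "real mat \<Rightarrow> complex mat" where "cm = map_mat complex_of_real"
  define \<rho>c where "\<rho>c = map complex_of_real \<rho>"
  have AH: "AH \<in> carrier_mat n n" and AR: "AR \<in> carrier_mat r r" and E: "E \<in> carrier_mat n n"
    unfolding AH_def AR_def E_def by auto
  have cAH: "cm AH \<in> carrier_mat n n" and cAR: "cm AR \<in> carrier_mat r r" and cE: "cm E \<in> carrier_mat n n"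
    using AH AR E unfolding cm_def by auto
  have "char_poly (cm AR) = (\<Prod>x\<in>#mset \<rho>c. [:- x, 1:])"
    using Spec_char_poly[OF AR] sp unfolding cm_def \<rho>c_def AR_def by simp
  hence cpR: "char_poly (cm AR) = (\<Prod>a\<leftarrow>\<rho>c. [:- a, 1:])"
    by (metis mset_map prod_mset_prod_list)
  obtain T P Q where sd: "schur_decomposition (cm AR) \<rho>c = (T,P,Q)" by (cases "schur_decomposition (cm AR) \<rho>c") auto
  from schur_decomposition[OF cAR cpR sd]
  have sim: "similar_mat_wit (cm AR) T P Q" and ut: "upper_triangular T" and dg: "diag_mat T = \<rho>c" by auto
  note W = similar_mat_witD2[OF cAR sim]
  have T: "T \<in> carrier_mat r r" and P: "P \<in> carrier_mat r r" and Q: "Q \<in> carrier_mat r r" using W by auto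
  have len: "length \<rho> = r" using dg T unfolding \<rho>c_def diag_mat_def by (metis length_map length_upt carrier_matD(1) diff_zero)
  have Tdiag: "T $$ (j,j) = complex_of_real (\<rho> ! j)" if "j < r" for j
  proof -
    have "diag_mat T ! j = T $$ (j,j)" using that T unfolding diag_mat_def by auto
    thus ?thesis using dg that len unfolding \<rho>c_def by auto
  qed
  define N where "N = kron (1\<^sub>m r) (cm AH) + kron T (cm E)"
  define Mc where "Mc = cm (A_alpha \<alpha> (r * n) (rooted_product_adj r adjR n adjH))"
  have Mc: "Mc = kron (1\<^sub>m r) (cm AH) + kron (cm AR) (cm E)"
    unfolding Mc_def A_alpha_rooted[OF R H n] AH_def[symmetric] AR_def[symmetric] E_def[symmetric]
    unfolding cm_def
    by (subst map_add_of_real[of _ "r*n" "r*n"]) (use AH AR E in \<open>auto simp: map_kron_of_real map_one_of_real\<close>)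
  have N: "N \<in> carrier_mat (r*n) (r*n)" unfolding N_def using cAH cE T by auto
  have K1: "kron P (1\<^sub>m n) \<in> carrier_mat (r*n) (r*n)" "kron Q (1\<^sub>m n) \<in> carrier_mat (r*n) (r*n)"
    using P Q by auto
  have PQ: "kron P (1\<^sub>m n) * kron Q (1\<^sub>m n) = 1\<^sub>m (r*n)"
    using kron_mult[OF P one_carrier_mat Q one_carrier_mat] W(1) kron_one[OF n0] by simp
  have QP: "kron Q (1\<^sub>m n) * kron P (1\<^sub>m n) = 1\<^sub>m (r*n)"
    using kron_mult[OF Q one_carrier_mat P one_carrier_mat] W(2) kron_one[OF n0] by simp
  have "kron P (1\<^sub>m n) * N = kron P (cm AH) + kron (P * T) (cm E)"
    unfolding N_def
    using mult_add_distrib_mat[OF K1(1), of "kron (1\<^sub>m r) (cm AH)" "r*n" "kron T (cm E)"]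
      kron_mult[OF P one_carrier_mat one_carrier_mat cAH] kron_mult[OF P one_carrier_mat T cE] cAH cE T P
    by simp
  hence "kron P (1\<^sub>m n) * N * kron Q (1\<^sub>m n) = kron (P * Q) (cm AH) + kron (P * T * Q) (cm E)"
    using add_mult_distrib_mat[of "kron P (cm AH)" "r*n" "r*n" "kron (P * T) (cm E)" "kron Q (1\<^sub>m n)" "r*n"]
      kron_mult[OF P cAH Q one_carrier_mat] kron_mult[of "P * T" r r "cm E" n n Q r "1\<^sub>m n" n] cAH cE T P Q
    by simp
  hence MN: "Mc = kron P (1\<^sub>m n) * N * kron Q (1\<^sub>m n)"
    unfolding Mc using W(1,3) by simp
  have McC: "Mc \<in> carrier_mat (r*n) (r*n)" unfolding Mc_def cm_def by simp
  hence dr: "dim_row Mc = r*n" by auto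
  have "similar_mat_wit Mc N (kron P (1\<^sub>m n)) (kron Q (1\<^sub>m n))"
    unfolding similar_mat_wit_def Let_def dr insert_subset
    using McC N K1 PQ QP MN by blast
  hence "similar_mat Mc N" unfolding similar_mat_def by blast
  hence "char_poly Mc = char_poly N" by (rule char_poly_similar)
  also have "\<dots> = (\<Prod>i<r. char_poly (blk n N i))"
  proof (rule char_poly_block_ut[OF N])
    fix i i' k k' assume h: "i' < i" "i < r" "k < n" "k' < n"
    have "T $$ (i,i') = 0" using ut h T unfolding upper_triangular_def by auto
    thus "N $$ (i*n+k, i'*n+k') = 0"
      unfolding N_def using h T cAH cE kron_index[OF one_carrier_mat cAH h(2) h(3) _ h(4), of i']
        kron_index[OF T cE h(2) h(3) _ h(4), of i'] idx_bound[OF h(2) h(3)] idx_bound[of i' r k' n] by auto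
  qed
  also have "\<dots> = (\<Prod>i<r. char_poly (cm (AH + \<rho> ! i \<cdot>\<^sub>m E)))"
  proof (rule prod.cong[OF refl])
    fix i assume "i \<in> {..<r}"
    hence i: "i < r" by simp
    have "blk n N i = cm (AH + \<rho> ! i \<cdot>\<^sub>m E)"
    proof (rule eq_matI)
      fix k l assume "k < dim_row (cm (AH + \<rho> ! i \<cdot>\<^sub>m E))" "l < dim_col (cm (AH + \<rho> ! i \<cdot>\<^sub>m E))"
      hence k: "k < n" and l: "l < n" using AH E unfolding cm_def by auto
      have "N $$ (i*n+k, i*n+l) = cm AH $$ (k,l) + T $$ (i,i) * cm E $$ (k,l)"
        unfolding N_def using T cAH cE kron_index[OF one_carrier_mat cAH i k i l]
          kron_index[OF T cE i k i l] idx_bound[OF i k] idx_bound[OF i l] i by auto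
      thus "blk n N i $$ (k,l) = cm (AH + \<rho> ! i \<cdot>\<^sub>m E) $$ (k,l)"
        unfolding blk_def cm_def using k l AH E Tdiag[OF i] by simp
    qed (use AH E in \<open>auto simp: blk_def cm_def\<close>)
    thus "char_poly (blk n N i) = char_poly (cm (AH + \<rho> ! i \<cdot>\<^sub>m E))" by simp
  qed
  also have "\<dots> = (\<Prod>i<r. \<Prod>x\<in>#Spec (AH + \<rho> ! i \<cdot>\<^sub>m E). [:- x, 1:])"
    unfolding cm_def using AH E by (intro prod.cong refl Spec_char_poly) auto
  also have "\<dots> = (\<Prod>x\<in>#(\<Sum>i<r. Spec (AH + \<rho> ! i \<cdot>\<^sub>m E)). [:- x, 1:])"
    by (rule prod_mset_sum_sets[symmetric]) simp
  finally show ?thesis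
    unfolding AH_def E_def by (intro Spec_eqI) (simp add: Mc_def cm_def AH_def E_def)
qed

end
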